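(* Let $X$ be an irreducible affine algebraic variety over an algebraically closed field $k$ whose coordinate ring $k[X]$ is factorial. Let $W$ be a finite-dimensional vector space over $k$ and $\varphi_1,\dots,\varphi_n,\psi:X\to W$ morphisms of algebraic varieties such that the set $O=\{x\in X\mid \varphi_1(x),\dots,\varphi_n(x)\text{ are linearly independent}\}$ is nonempty, while for each $x\in X$ the $n+1$ vectors $\varphi_1(x),\dots,\varphi_n(x),\psi(x)$ are linearly dependent. Then there exist $p_1,\dots,p_n,p_0\in k[X]$ with $\gcd(p_1,\dots,p_n,p_0)=1$ and $p_0(x)\psi(x)=\sum_{i=1}^n p_i(x)\varphi_i(x)$ for all $x\in X$. Moreover, for functions $h_1,\dots,h_n,h_0\in k[X]$ the equality $h_0(x)\psi(x)=\sum_{i=1}^n h_i(x)\varphi_i(x)$ holds identically on $X$ if and only if there is $g\in k[X]$ with $h_i=gp_i$ for all $i=0,1,\dots,n$. *)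

theory Defs
  imports "HOL-Algebra.Ring_Divisibility"
begin

definition alg_closed :: "'k::field itself \<Rightarrow> bool" where
  "alg_closed _ \<longleftrightarrow> (\<forall>(n::nat) (c::nat \<Rightarrow> 'k). n \<ge> 1 \<longrightarrow>
      (\<exists>z. z ^ n + (\<Sum>i<n. c i * z ^ i) = 0))"

definition fun_ring :: "('x \<Rightarrow> 'k::field) set \<Rightarrow> ('x \<Rightarrow> 'k) ring" where
  "fun_ring A = \<lparr> carrier = A, monoid.mult = (\<lambda>f g x. f x * g x), one = (\<lambda>_. 1),
                  zero = (\<lambda>_. 0), add = (\<lambda>f g x. f x + g x) \<rparr>"

inductive_set alg_gen :: "('x \<Rightarrow> 'k::field) set \<Rightarrow> ('x \<Rightarrow> 'k) set" for G where
  const: "(\<lambda>_. c) \<in> alg_gen G"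
| gen: "g \<in> G \<Longrightarrow> g \<in> alg_gen G"
| add: "f \<in> alg_gen G \<Longrightarrow> g \<in> alg_gen G \<Longrightarrow> (\<lambda>x. f x + g x) \<in> alg_gen G"
| mult: "f \<in> alg_gen G \<Longrightarrow> g \<in> alg_gen G \<Longrightarrow> (\<lambda>x. f x * g x) \<in> alg_gen G"

text \<open>A is the coordinate ring k[X] of an affine variety whose set of points is the type 'x:
  A is a finitely generated k-algebra of functions X \<rightarrow> k that separates points, and every
  k-algebra homomorphism A \<rightarrow> k is evaluation at a point of X (i.e. X = Specm k[X]).\<close>
definition affine_coord_ring :: "('x \<Rightarrow> 'k::field) set \<Rightarrow> bool" where
  "affine_coord_ring A \<longleftrightarrow>
     (\<exists>G. finite G \<and> G \<subseteq> A \<and> A = alg_gen G) \<and>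
     (\<forall>x y. x \<noteq> y \<longrightarrow> (\<exists>f\<in>A. f x \<noteq> f y)) \<and>
     (\<forall>h :: ('x \<Rightarrow> 'k) \<Rightarrow> 'k.
        ((\<forall>c. h (\<lambda>_. c) = c) \<and>
         (\<forall>f\<in>A. \<forall>g\<in>A. h (\<lambda>x. f x + g x) = h f + h g) \<and>
         (\<forall>f\<in>A. \<forall>g\<in>A. h (\<lambda>x. f x * g x) = h f * h g))
        \<longrightarrow> (\<exists>x. \<forall>f\<in>A. h f = f x))"

text \<open>Vectors in W = k^m are given by their coordinates j < m. Linear independence of the
  family v 1, ..., v n.\<close>
definition lin_indep :: "nat \<Rightarrow> nat \<Rightarrow> (nat \<Rightarrow> nat \<Rightarrow> 'k::field) \<Rightarrow> bool" where
  "lin_indep m n v \<longleftrightarrow> (\<forall>c::nat \<Rightarrow> 'k.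
      (\<forall>j<m. (\<Sum>i=1..n. c i * v i j) = 0) \<longrightarrow> (\<forall>i\<in>{1..n}. c i = 0))"

definition lin_dep_with :: "nat \<Rightarrow> nat \<Rightarrow> (nat \<Rightarrow> nat \<Rightarrow> 'k::field) \<Rightarrow> (nat \<Rightarrow> 'k) \<Rightarrow> bool" where
  "lin_dep_with m n v w \<longleftrightarrow> (\<exists>(c::nat \<Rightarrow> 'k) c0. (c0 \<noteq> 0 \<or> (\<exists>i\<in>{1..n}. c i \<noteq> 0)) \<and>
      (\<forall>j<m. c0 * w j + (\<Sum>i=1..n. c i * v i j) = 0))"

end

theory Submission
  imports Defs "Jordan_Normal_Form.Determinant" "HOL-Library.Function_Algebras"
begin


lemma sum_fun_apply: "finite S \<Longrightarrow> (\<Sum>i\<in>S. f i) x = (\<Sum>i\<in>S. f i x)"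
  by (induction S rule: finite_induct) auto

lemma vs_fun: "vector_space (\<lambda>c (v::nat\<Rightarrow>'k::field) i. c * v i)"
  by unfold_locales (auto simp: fun_eq_iff algebra_simps)

lemma left_inv:
  fixes M :: "nat \<Rightarrow> nat \<Rightarrow> 'k::field"
  assumes li: "lin_indep m n M"
  shows "\<exists>B. \<forall>k\<in>{1..n}. \<forall>i\<in>{1..n}. (\<Sum>j<m. B k j * M i j) = (if k = i then 1 else 0)"
proof -
  define s where "s = (\<lambda>c (v::nat\<Rightarrow>'k) i. c * v i)"
  interpret V: vector_space s unfolding s_def by (rule vs_fun)
  interpret VP: vector_space_pair s s by unfold_locales
  define e where "e = (\<lambda>i::nat. (\<lambda>k::nat. if k = i then (1::'k) else 0))"
  define f where "f = (\<lambda>c::nat\<Rightarrow>'k. (\<lambda>j. if j < m then (\<Sum>i=1..n. c i * M i j) else 0))"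
  define S where "S = e ` {1..n}"
  have lf: "Vector_Spaces.linear s s f"
    unfolding Vector_Spaces.linear_iff s_def
    using vs_fun by (auto simp: f_def fun_eq_iff sum.distrib algebra_simps sum_distrib_left)
  have supp: "\<forall>i. i \<notin> {1..n} \<longrightarrow> c i = 0" if "c \<in> V.span S" for c :: "nat \<Rightarrow> 'k"
  proof -
    have "V.subspace {c. \<forall>i. i \<notin> {1..n} \<longrightarrow> c i = 0}"
      unfolding V.subspace_def by (auto simp: s_def)
    moreover have "\<And>x. x \<in> S \<Longrightarrow> \<forall>i. i \<notin> {1..n} \<longrightarrow> x i = 0"
      unfolding S_def e_def by auto
    ultimately show ?thesis using V.span_induct[OF that, of "\<lambda>c. \<forall>i. i \<notin> {1..n} \<longrightarrow> c i = 0"]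
      by blast
  qed
  have inj: "inj_on f (V.span S)"
  proof -
    have "\<forall>x\<in>V.span S. f x = 0 \<longrightarrow> x = 0"
    proof (intro ballI impI)
      fix x assume x: "x \<in> V.span S" and fx: "f x = 0"
      have "\<forall>j<m. (\<Sum>i=1..n. x i * M i j) = 0"
      proof (intro allI impI)
        fix j assume "j < m"
        then show "(\<Sum>i=1..n. x i * M i j) = 0" using fun_cong[OF fx, of j] by (simp add: f_def)
      qed
      then have "\<forall>i\<in>{1..n}. x i = 0" using li unfolding lin_indep_def by blast
      with supp[OF x] show "x = 0" by (auto simp: fun_eq_iff)
    qed
    then show ?thesis
      using VP.linear_inj_on_iff_eq_0[OF lf V.subspace_span] by blast
  qed
  obtain g where g: "Vector_Spaces.linear s s g" "\<forall>x\<in>V.span S. g (f x) = x"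
    using VP.linear_inj_on_left_inverse[OF lf inj] by blast
  define B where "B = (\<lambda>k j. g (e j) k)"
  have "(\<Sum>j<m. B k j * M i j) = (if k = i then 1 else 0)" if k: "k \<in> {1..n}" and i: "i \<in> {1..n}" for k i
  proof -
    have fe: "f (e i) = (\<Sum>j<m. s (M i j) (e j))"
    proof (rule ext)
      fix j
      have "(\<Sum>i'=1..n. e i i' * M i' j) = M i j"
        using i by (simp add: e_def if_distrib[of "\<lambda>x. x * M _ j"] sum.delta cong: if_cong)
      then show "f (e i) j = (\<Sum>j<m. s (M i j) (e j)) j"
        by (simp add: f_def sum_fun_apply s_def e_def if_distrib[of "\<lambda>x. M i _ * x"] sum.delta cong: if_cong)
    qed
    have "e i \<in> V.span S" using i unfolding S_def by (auto intro: V.span_base)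
    then have "e i = g (f (e i))" using g(2) by simp
    also have "\<dots> = (\<Sum>j<m. s (M i j) (g (e j)))"
      unfolding fe VP.linear_sum[OF g(1)] VP.linear_scale[OF g(1)] ..
    finally have "e i k = (\<Sum>j<m. s (M i j) (g (e j))) k" by simp
    then show ?thesis by (simp add: sum_fun_apply s_def B_def e_def mult.commute)
  qed
  then show ?thesis by blast
qed




lemma (in factorial_domain) gauss_lemma:
  assumes "a \<in> carrier R" "a \<noteq> \<zero>"
  shows "\<And>b. b \<in> carrier R \<Longrightarrow> (\<forall>i\<in>I. c i \<in> carrier R) \<Longrightarrow>
    (\<forall>d\<in>carrier R. (\<forall>i\<in>I. d divides c i) \<longrightarrow> d \<in> Units R) \<Longrightarrow>
    (\<forall>i\<in>I. a divides b \<otimes> c i) \<Longrightarrow> a divides b"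
proof -
  have acm: "a \<in> carrier (mult_of R)" using assms by simp
  have "\<And>b. a \<in> carrier (mult_of R) \<Longrightarrow> b \<in> carrier R \<Longrightarrow> (\<forall>i\<in>I. c i \<in> carrier R) \<Longrightarrow>
    (\<forall>d\<in>carrier R. (\<forall>i\<in>I. d divides c i) \<longrightarrow> d \<in> Units R) \<Longrightarrow>
    (\<forall>i\<in>I. a divides b \<otimes> c i) \<Longrightarrow> a divides b"
    using division_wellfounded
  proof (induction a rule: wf_induct_rule)
    case (less a)
    note b = less.prems(2) and cc = less.prems(3) and gcd = less.prems(4) and dv = less.prems(5)
    have a: "a \<in> carrier R" "a \<noteq> \<zero>" using less.prems(1) by auto
    show ?case
    proof (cases "b = \<zero> \<or> a \<in> Units R")
      case True
      then show ?thesis using divides_zero unit_divides b a by auto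
    next
      case False
      then have b0: "b \<noteq> \<zero>" and au: "a \<notin> Units (mult_of R)" by auto
      obtain fs where fs: "set fs \<subseteq> carrier (mult_of R)" "factors (mult_of R) fs a"
        using factors_exist[OF less.prems(1) au] by blast
      have "fs \<noteq> []"
      proof
        assume "fs = []"
        then have "a = \<one>" using fs(2) by (simp add: factors_def)
        then show False using au by simp
      qed
      then obtain q fs' where fsq: "fs = q # fs'" by (cases fs) auto
      define a' where "a' = foldr (\<otimes>) fs' \<one>"
      have qc: "q \<in> carrier (mult_of R)" using fs fsq by auto
      have a'c: "a' \<in> carrier (mult_of R)" unfolding a'_def
        using mult_of.multlist_closed[of fs'] fs fsq by auto
      have aqa: "a = q \<otimes> a'" using fs(2) fsq by (simp add: factors_def a'_def)
      have qirr: "Divisibility.irreducible (mult_of R) q" using fs(2) fsq by (simp add: factors_def)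
      have qprime: "Divisibility.prime (mult_of R) q" using irreducible_prime[OF qirr qc] .
      have qnu: "q \<notin> Units R" using qprime by (simp add: Divisibility.prime_def)
      have qR: "q \<in> carrier R" "q \<noteq> \<zero>" and a'R: "a' \<in> carrier R" "a' \<noteq> \<zero>" using qc a'c by auto
      obtain k where k: "k \<in> I" "\<not> q divides c k"
        using gcd qR qnu by blast
      have ck: "c k \<in> carrier R" using cc k by auto
      have ck0: "c k \<noteq> \<zero>" using k(2) divides_zero qR by auto
      have bck: "b \<otimes> c k \<in> carrier R - {\<zero>}" using b ck b0 ck0 integral by auto
      have "q divides a" using aqa a'R by (auto simp: factor_def)
      then have "q divides b \<otimes> c k" using dv k(1) divides_trans qR by blast
      then have "q divides\<^bsub>mult_of R\<^esub> b \<otimes> c k" using divides_imp_divides_mult qR bck by blast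
      moreover have "\<forall>x\<in>carrier (mult_of R). \<forall>y\<in>carrier (mult_of R). q divides\<^bsub>mult_of R\<^esub> x \<otimes>\<^bsub>mult_of R\<^esub> y \<longrightarrow> q divides\<^bsub>mult_of R\<^esub> x \<or> q divides\<^bsub>mult_of R\<^esub> y"
        using qprime unfolding Divisibility.prime_def by (rule conjunct2)
      moreover have bm: "b \<in> carrier (mult_of R)" "c k \<in> carrier (mult_of R)" using b b0 ck ck0 by auto
      ultimately have "q divides\<^bsub>mult_of R\<^esub> b \<or> q divides\<^bsub>mult_of R\<^esub> c k"
        unfolding mult_mult_of by (meson bspec mp)
      then have "q divides b"
      proof
        assume "q divides\<^bsub>mult_of R\<^esub> c k"
        then have "q divides c k" by (rule divides_mult_imp_divides)
        with k(2) show ?thesis by contradiction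
      qed (rule divides_mult_imp_divides)
      then obtain b' where b': "b' \<in> carrier R" "b = q \<otimes> b'" by (auto simp: factor_def)
      have dvi: "a' divides b' \<otimes> c i" if i: "i \<in> I" for i
      proof -
        have "q \<otimes> a' divides q \<otimes> (b' \<otimes> c i)"
          using dv i aqa b' cc qR by (simp add: m_assoc)
        then show ?thesis using mult_divides[of a' "b' \<otimes> c i" q] a'R qR b' cc i by auto
      qed
      have rel: "(a', a) \<in> {(x, y). x \<in> carrier (mult_of R) \<and> y \<in> carrier (mult_of R) \<and> properfactor (mult_of R) x y}"
      proof -
        have "a = a' \<otimes>\<^bsub>mult_of R\<^esub> q" using aqa qR a'R m_comm by simp
        then have "properfactor (mult_of R) a' a"
          using mult_of.properfactorI3[of a a' q] qc a'c qnu by simp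
        then show ?thesis using a'c less.prems(1) by simp
      qed
      have "\<forall>i\<in>I. a' divides b' \<otimes> c i" using dvi by blast
      then have "a' divides b'" by (rule less.IH[OF rel a'c b'(1) cc gcd])
      then have "q \<otimes> a' divides q \<otimes> b'" using divides_mult a'R qR by blast
      then show ?thesis using aqa b' by simp
    qed
  qed
  note main = this
  show "\<And>b. b \<in> carrier R \<Longrightarrow> (\<forall>i\<in>I. c i \<in> carrier R) \<Longrightarrow>
    (\<forall>d\<in>carrier R. (\<forall>i\<in>I. d divides c i) \<longrightarrow> d \<in> Units R) \<Longrightarrow>
    (\<forall>i\<in>I. a divides b \<otimes> c i) \<Longrightarrow> a divides b" by (rule main[OF acm])
qed



lemma acr_gen: "affine_coord_ring A \<Longrightarrow> \<exists>G. A = alg_gen G"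
  unfolding affine_coord_ring_def by blast

lemma A_const: "affine_coord_ring A \<Longrightarrow> (\<lambda>_. c) \<in> A"
  using acr_gen alg_gen.const by metis

lemma A_add: "affine_coord_ring A \<Longrightarrow> f \<in> A \<Longrightarrow> g \<in> A \<Longrightarrow> (\<lambda>x. f x + g x) \<in> A"
  using acr_gen alg_gen.add by metis

lemma A_mult: "affine_coord_ring A \<Longrightarrow> f \<in> A \<Longrightarrow> g \<in> A \<Longrightarrow> (\<lambda>x. f x * g x) \<in> A"
  using acr_gen alg_gen.mult by metis

lemma A_sum:
  assumes "affine_coord_ring A" "finite S" "\<And>i. i \<in> S \<Longrightarrow> f i \<in> A"
  shows "(\<lambda>x. \<Sum>i\<in>S. f i x) \<in> A"
  using assms(2,3)
proof (induction S rule: finite_induct)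
  case empty
  then show ?case using A_const[OF assms(1)] by simp
next
  case (insert a F)
  then show ?case using A_add[OF assms(1), of "f a" "\<lambda>x. \<Sum>i\<in>F. f i x"] by simp
qed

lemma A_prod:
  assumes "affine_coord_ring A" "finite S" "\<And>i. i \<in> S \<Longrightarrow> f i \<in> A"
  shows "(\<lambda>x. \<Prod>i\<in>S. f i x) \<in> A"
  using assms(2,3)
proof (induction S rule: finite_induct)
  case empty
  then show ?case using A_const[OF assms(1)] by simp
next
  case (insert a F)
  then show ?case using A_mult[OF assms(1), of "f a" "\<lambda>x. \<Prod>i\<in>F. f i x"] by simp
qed

lemma A_det:
  assumes acr: "affine_coord_ring A" and E: "\<And>x. E x \<in> carrier_mat n n"
    and ent: "\<And>i j. i < n \<Longrightarrow> j < n \<Longrightarrow> (\<lambda>x. E x $$ (i, j)) \<in> A"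
  shows "(\<lambda>x. det (E x)) \<in> A"
proof -
  have "(\<lambda>x. \<Sum>p\<in>{p. p permutes {0..<n}}. signof p * (\<Prod>i=0..<n. E x $$ (i, p i))) \<in> A"
  proof (rule A_sum[OF acr])
    show "finite {p. p permutes {0..<n}}" by (simp add: finite_permutations)
    fix p assume p: "p \<in> {p. p permutes {0..<n}}"
    have "(\<lambda>x. \<Prod>i=0..<n. E x $$ (i, p i)) \<in> A"
    proof (rule A_prod[OF acr, of "{0..<n}" "\<lambda>i x. E x $$ (i, p i)", simplified])
      fix i assume "i < n"
      then have "p i < n" using p permutes_in_image[of p "{0..<n}" i] by auto
      then show "(\<lambda>x. E x $$ (i, p i)) \<in> A" using ent \<open>i < n\<close> by blast
    qed
    then show "(\<lambda>x. signof p * (\<Prod>i=0..<n. E x $$ (i, p i))) \<in> A"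
      using A_mult[OF acr A_const[OF acr]] by blast
  qed
  then show ?thesis using det_def'[OF E] by simp
qed

lemma fr_divides: "a divides\<^bsub>fun_ring A\<^esub> b \<longleftrightarrow> (\<exists>c\<in>A. b = (\<lambda>x. a x * c x))"
  by (simp add: factor_def fun_ring_def)

lemma fr_units: "a \<in> Units (fun_ring A) \<longleftrightarrow> a \<in> A \<and> (\<exists>b\<in>A. (\<lambda>x. b x * a x) = (\<lambda>_. 1) \<and> (\<lambda>x. a x * b x) = (\<lambda>_. 1))"
  by (simp add: Units_def fun_ring_def)

lemma fr_integral:
  assumes "domain (fun_ring A)" "f \<in> A" "g \<in> A" "(\<lambda>x. f x * g x) = (\<lambda>_. 0)"
  shows "f = (\<lambda>_. 0) \<or> g = (\<lambda>_. 0)"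
  using domain.integral[OF assms(1), of f g] assms(2-4) by (simp add: fun_ring_def)

lemma fr_cancel:
  assumes acr: "affine_coord_ring A" and dom: "domain (fun_ring A)"
    and f: "f \<in> A" and g: "g \<in> A" and h: "h \<in> A" and f0: "f \<noteq> (\<lambda>_. 0)"
    and eq: "\<And>x. f x * g x = f x * h x"
  shows "g = h"
proof -
  have d: "(\<lambda>x. g x - h x) \<in> A"
    using A_add[OF acr g A_mult[OF acr A_const[OF acr, of "-1"] h]] by simp
  have "(\<lambda>x. f x * (g x - h x)) = (\<lambda>_. 0)"
    using eq by (simp add: fun_eq_iff algebra_simps)
  then have "(\<lambda>x. g x - h x) = (\<lambda>_. 0)" using fr_integral[OF dom f d] f0 by blast
  then show ?thesis by (simp add: fun_eq_iff)
qed


lemma (in factorial_domain) wfW: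
  "wf {(x, y). x \<in> carrier (mult_of R) \<and> y \<in> carrier (mult_of R) \<and> properfactor (mult_of R) x y}"
  by (rule division_wellfounded)

lemma fr_carrier: "carrier (fun_ring A) = A" by (simp add: fun_ring_def)
lemma fr_zero: "zero (fun_ring A) = (\<lambda>_. 0)" by (simp add: fun_ring_def)
lemma fr_one: "one (fun_ring A) = (\<lambda>_. 1)" by (simp add: fun_ring_def)
lemma fr_mult: "mult (fun_ring A) f g = (\<lambda>x. f x * g x)" by (simp add: fun_ring_def)

lemma vec_shift: "i \<in> {1..n} \<Longrightarrow> vec n (\<lambda>s. f (Suc s)) $ (i - 1) = f i"
proof -
  assume i: "i \<in> {1..n}"
  then have "i - 1 < n" "Suc (i - 1) = i" by auto
  then show ?thesis by (metis index_vec)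
qed

lemma sum_shift1: "(\<Sum>s=0..<n. g (Suc s)) = (\<Sum>i=1..n. g i)"
  by (induction n) auto

theorem lemma3p3:
  fixes A :: "('x \<Rightarrow> 'k::field) set"
    and m n :: nat
    and \<phi> :: "nat \<Rightarrow> 'x \<Rightarrow> nat \<Rightarrow> 'k"
    and \<psi> :: "'x \<Rightarrow> nat \<Rightarrow> 'k"
  assumes "alg_closed TYPE('k)"
    and "affine_coord_ring A"
    and "domain (fun_ring A)"
    and "factorial_domain (fun_ring A)"
    and "\<forall>i\<in>{1..n}. \<forall>j<m. (\<lambda>x. \<phi> i x j) \<in> A"
    and "\<forall>j<m. (\<lambda>x. \<psi> x j) \<in> A"
    and "\<exists>x. lin_indep m n (\<lambda>i. \<phi> i x)"
    and "\<forall>x. lin_dep_with m n (\<lambda>i. \<phi> i x) (\<psi> x)"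
  shows "\<exists>p :: nat \<Rightarrow> 'x \<Rightarrow> 'k.
           (\<forall>i\<le>n. p i \<in> A) \<and>
           (\<forall>d\<in>A. (\<forall>i\<le>n. d divides\<^bsub>fun_ring A\<^esub> p i) \<longrightarrow> d \<in> Units (fun_ring A)) \<and>
           (\<forall>x. \<forall>j<m. p 0 x * \<psi> x j = (\<Sum>i=1..n. p i x * \<phi> i x j)) \<and>
           (\<forall>h :: nat \<Rightarrow> 'x \<Rightarrow> 'k. (\<forall>i\<le>n. h i \<in> A) \<longrightarrow>
              ((\<forall>x. \<forall>j<m. h 0 x * \<psi> x j = (\<Sum>i=1..n. h i x * \<phi> i x j)) \<longleftrightarrow>
               (\<exists>g\<in>A. \<forall>i\<le>n. h i = (\<lambda>x. g x * p i x))))"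
  proof -
  note acr = assms(2) and dom = assms(3) and fd = assms(4)
  note phiA = assms(5) and psiA = assms(6)
  obtain x0 where x0: "lin_indep m n (\<lambda>i. \<phi> i x0)" using assms(7) by blast
  obtain B where B: "\<forall>k\<in>{1..n}. \<forall>i\<in>{1..n}. (\<Sum>j<m. B k j * \<phi> i x0 j) = (if k = i then 1 else 0)"
    using left_inv[OF x0] by blast
  define N where "N = (\<lambda>x. mat n n (\<lambda>(r,s). \<Sum>j<m. B (Suc r) j * \<phi> (Suc s) x j))"
  define bv where "bv = (\<lambda>x. vec n (\<lambda>r. \<Sum>j<m. B (Suc r) j * \<psi> x j))"
  define D where "D = (\<lambda>x. det (N x))"
  define Di where "Di = (\<lambda>i x. det (replace_col (N x) (bv x) (i - 1)))"
  have NC: "N x \<in> carrier_mat n n" for x unfolding N_def by simp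
  have NDim: "dim_row (N x) = n" "dim_col (N x) = n" for x unfolding N_def by simp_all
  have N_ent: "(\<lambda>x. N x $$ (r, s)) \<in> A" if rs: "r < n" "s < n" for r s
  proof -
    have "(\<lambda>x. \<Sum>j<m. B (Suc r) j * \<phi> (Suc s) x j) \<in> A"
    proof (rule A_sum[OF acr, of "{..<m}" "\<lambda>j x. B (Suc r) j * \<phi> (Suc s) x j", simplified])
      fix j assume "j < m"
      then have "(\<lambda>x. \<phi> (Suc s) x j) \<in> A" using phiA rs by auto
      then show "(\<lambda>x. B (Suc r) j * \<phi> (Suc s) x j) \<in> A" by (rule A_mult[OF acr A_const[OF acr]])
    qed
    then show ?thesis using rs unfolding N_def by simp
  qed
  have bv_ent: "(\<lambda>x. bv x $ r) \<in> A" if r: "r < n" for r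
  proof -
    have "(\<lambda>x. \<Sum>j<m. B (Suc r) j * \<psi> x j) \<in> A"
    proof (rule A_sum[OF acr, of "{..<m}" "\<lambda>j x. B (Suc r) j * \<psi> x j", simplified])
      fix j assume "j < m"
      then have "(\<lambda>x. \<psi> x j) \<in> A" using psiA by auto
      then show "(\<lambda>x. B (Suc r) j * \<psi> x j) \<in> A" by (rule A_mult[OF acr A_const[OF acr]])
    qed
    then show ?thesis using r unfolding bv_def by simp
  qed
  have D_A: "D \<in> A" unfolding D_def by (rule A_det[OF acr NC N_ent])
  have Di_A: "Di i \<in> A" for i
    unfolding Di_def
  proof (rule A_det[OF acr])
    show "replace_col (N x) (bv x) (i - 1) \<in> carrier_mat n n" for x
      by (simp add: replace_col_def N_def)
    fix r s assume rs: "r < n" "s < n"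
    have "(\<lambda>x. replace_col (N x) (bv x) (i - 1) $$ (r, s)) =
          (\<lambda>x. if s = i - 1 then bv x $ r else N x $$ (r, s))"
      using rs by (simp add: replace_col_def NDim)
    then show "(\<lambda>x. replace_col (N x) (bv x) (i - 1) $$ (r, s)) \<in> A"
      using bv_ent[OF rs(1)] N_ent[OF rs] by (cases "s = i - 1") simp_all
  qed
  have "N x0 = 1\<^sub>m n"
  proof (rule eq_matI)
    fix r s assume rs: "r < dim_row (1\<^sub>m n)" "s < dim_col (1\<^sub>m n)"
    then have "Suc r \<in> {1..n}" "Suc s \<in> {1..n}" by auto
    then show "N x0 $$ (r, s) = 1\<^sub>m n $$ (r, s)" using rs B unfolding N_def by simp
  qed (simp_all add: N_def)
  then have D0: "D x0 = 1" unfolding D_def by simp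
  have Dnz: "D \<noteq> (\<lambda>_. 0)" proof
    assume "D = (\<lambda>_. 0)"
    then have "D x0 = 0" by simp
    then show False using D0 by simp
  qed
  have Nv: "(N x *\<^sub>v vec n (\<lambda>s. c (Suc s))) $ r = (\<Sum>j<m. B (Suc r) j * (\<Sum>i=1..n. c i * \<phi> i x j))"
    if r: "r < n" for x c r
  proof -
    have "(N x *\<^sub>v vec n (\<lambda>s. c (Suc s))) $ r = (\<Sum>s=0..<n. (\<Sum>j<m. B (Suc r) j * \<phi> (Suc s) x j) * c (Suc s))"
      using r by (simp add: N_def scalar_prod_def)
    also have "\<dots> = (\<Sum>s=0..<n. \<Sum>j<m. B (Suc r) j * (c (Suc s) * \<phi> (Suc s) x j))"
      by (rule sum.cong[OF refl], subst sum_distrib_right, rule sum.cong[OF refl], simp add: mult_ac)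
    also have "\<dots> = (\<Sum>j<m. \<Sum>s=0..<n. B (Suc r) j * (c (Suc s) * \<phi> (Suc s) x j))"
      by (rule sum.swap)
    also have "\<dots> = (\<Sum>j<m. B (Suc r) j * (\<Sum>s=0..<n. c (Suc s) * \<phi> (Suc s) x j))"
      by (simp add: sum_distrib_left)
    also have "\<dots> = (\<Sum>j<m. B (Suc r) j * (\<Sum>i=1..n. c i * \<phi> i x j))"
      using sum_shift1[of "\<lambda>i. c i * \<phi> i x _" n] by simp
    finally show ?thesis .
  qed
  have indep: "lin_indep m n (\<lambda>i. \<phi> i x)" if Dx: "D x \<noteq> 0" for x
  proof (unfold lin_indep_def, intro allI impI)
    fix c assume c: "\<forall>j<m. (\<Sum>i=1..n. c i * \<phi> i x j) = 0"
    define v where "v = vec n (\<lambda>s. c (Suc s))"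
    have "N x *\<^sub>v v = 0\<^sub>v n"
    proof (rule eq_vecI)
      fix r assume r: "r < dim_vec (0\<^sub>v n :: 'k vec)"
      then show "(N x *\<^sub>v v) $ r = 0\<^sub>v n $ r" using Nv[of r x c] c by (simp add: v_def)
    qed (simp add: N_def)
    moreover have "v \<in> carrier_vec n" by (simp add: v_def)
    ultimately have "v = 0\<^sub>v n" using det_0_iff_vec_prod_zero[OF NC[of x]] Dx unfolding D_def by blast
    then show "\<forall>i\<in>{1..n}. c i = 0"
    proof (intro ballI)
      fix i assume i: "i \<in> {1..n}"
      then have "i - 1 < n" by auto
      then have "v $ (i - 1) = 0" using \<open>v = 0\<^sub>v n\<close> by simp
      moreover have "Suc (i - 1) = i" using i by auto
      ultimately show "c i = 0" using \<open>i - 1 < n\<close> unfolding v_def by (metis index_vec)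
    qed
  qed
  have cram: "D x * \<psi> x j = (\<Sum>i=1..n. Di i x * \<phi> i x j)" if Dx: "D x \<noteq> 0" and j: "j < m" for x j
  proof -
    obtain c c0 where cc: "c0 \<noteq> 0 \<or> (\<exists>i\<in>{1..n}. c i \<noteq> 0)"
      "\<forall>j<m. c0 * \<psi> x j + (\<Sum>i=1..n. c i * \<phi> i x j) = 0"
      using assms(8) unfolding lin_dep_with_def by blast
    have c0: "c0 \<noteq> 0"
    proof
      assume "c0 = 0"
      then have "\<forall>j<m. (\<Sum>i=1..n. c i * \<phi> i x j) = 0" using cc(2) by simp
      then have "\<forall>i\<in>{1..n}. c i = 0" using indep[OF Dx] unfolding lin_indep_def by blast
      with cc(1) \<open>c0 = 0\<close> show False by blast
    qed
    define d where "d = (\<lambda>i. - c i / c0)"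
    have psi_eq: "\<psi> x j' = (\<Sum>i=1..n. d i * \<phi> i x j')" if j': "j' < m" for j'
    proof -
      have "c0 * \<psi> x j' = - (\<Sum>i=1..n. c i * \<phi> i x j')" using cc(2) j' by (simp add: eq_neg_iff_add_eq_0)
      then have "\<psi> x j' = - (\<Sum>i=1..n. c i * \<phi> i x j') / c0" using c0 by (simp add: field_simps)
      also have "\<dots> = (\<Sum>i=1..n. d i * \<phi> i x j')"
        by (simp add: d_def sum_divide_distrib sum_negf[symmetric])
      finally show ?thesis .
    qed
    define dv where "dv = vec n (\<lambda>s. d (Suc s))"
    have dvC: "dv \<in> carrier_vec n" by (simp add: dv_def)
    have bvN: "bv x = N x *\<^sub>v dv"
    proof (rule eq_vecI)
      fix r assume r: "r < dim_vec (N x *\<^sub>v dv)"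
      then have r': "r < n" by (simp add: N_def)
      have "bv x $ r = (\<Sum>j<m. B (Suc r) j * \<psi> x j)" using r' by (simp add: bv_def)
      also have "\<dots> = (\<Sum>j<m. B (Suc r) j * (\<Sum>i=1..n. d i * \<phi> i x j))"
        using psi_eq by simp
      also have "\<dots> = (N x *\<^sub>v dv) $ r" using Nv[OF r', of x d] by (simp add: dv_def)
      finally show "bv x $ r = (N x *\<^sub>v dv) $ r" .
    qed (simp add: N_def bv_def)
    have Did: "Di i x = d i * D x" if i: "i \<in> {1..n}" for i
    proof -
      have "i - 1 < n" using i by auto
      then have "Di i x = dv $ (i - 1) * D x"
        unfolding Di_def D_def bvN by (rule cramer_lemma_mat[OF NC dvC])
      then show ?thesis using vec_shift[OF i, of d] by (simp add: dv_def)
    qed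
    have "(\<Sum>i=1..n. Di i x * \<phi> i x j) = (\<Sum>i=1..n. D x * (d i * \<phi> i x j))"
      using Did by (intro sum.cong) (simp_all add: mult_ac)
    also have "\<dots> = D x * \<psi> x j" using psi_eq[OF j] by (simp add: sum_distrib_left)
    finally show ?thesis by simp
  qed
  have relD: "\<forall>x. \<forall>j<m. D x * \<psi> x j = (\<Sum>i=1..n. Di i x * \<phi> i x j)"
  proof (intro allI impI)
    fix x j assume j: "j < m"
    have "(\<lambda>x. \<psi> x j) \<in> A" using psiA j by auto
    then have g: "(\<lambda>x. \<psi> x j) \<in> A" .
    have h: "(\<lambda>x. \<Sum>i=1..n. Di i x * \<phi> i x j) \<in> A"
    proof (rule A_sum[OF acr])
      show "finite {1..n}" by simp
      fix i assume "i \<in> {1..n}"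
      then have "(\<lambda>x. \<phi> i x j) \<in> A" using phiA j by auto
      then show "(\<lambda>x. Di i x * \<phi> i x j) \<in> A" by (rule A_mult[OF acr Di_A])
    qed
    have "(\<lambda>x. D x * \<psi> x j) = (\<lambda>x. \<Sum>i=1..n. Di i x * \<phi> i x j)"
    proof (rule fr_cancel[OF acr dom D_A A_mult[OF acr D_A g] h Dnz])
      fix y
      show "D y * (D y * \<psi> y j) = D y * (\<Sum>i=1..n. Di i y * \<phi> i y j)"
        using cram[of y j] j by (cases "D y = 0") simp_all
    qed
    then show "D x * \<psi> x j = (\<Sum>i=1..n. Di i x * \<phi> i x j)" by (simp add: fun_eq_iff)
  qed
  let ?R = "fun_ring A"
  define W where "W = {(x, y). x \<in> carrier (mult_of ?R) \<and> y \<in> carrier (mult_of ?R) \<and> properfactor (mult_of ?R) x y}"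
  have wfW: "wf W" unfolding W_def by (rule factorial_domain.wfW[OF fd])
  define S where "S = {q :: nat \<Rightarrow> 'x \<Rightarrow> 'k. (\<forall>i\<le>n. q i \<in> A) \<and> q 0 \<noteq> (\<lambda>_. 0) \<and>
     (\<forall>x. \<forall>j<m. q 0 x * \<psi> x j = (\<Sum>i=1..n. q i x * \<phi> i x j))}"
  define q0 where "q0 = (\<lambda>i::nat. if i = 0 then D else Di i)"
  have "q0 \<in> S"
  proof -
    have "(\<Sum>i=1..n. q0 i x * \<phi> i x j) = (\<Sum>i=1..n. Di i x * \<phi> i x j)" for x j
      by (rule sum.cong) (auto simp: q0_def)
    moreover have "q0 0 = D" by (simp add: q0_def)
    moreover have "\<forall>i\<le>n. q0 i \<in> A" using D_A Di_A by (simp add: q0_def)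
    ultimately show ?thesis unfolding S_def using Dnz relD by simp
  qed
  then have "q0 0 \<in> (\<lambda>q. q 0) ` S" by blast
  then obtain z where z: "z \<in> (\<lambda>q. q 0) ` S" and zmin: "\<And>y. (y, z) \<in> W \<Longrightarrow> y \<notin> (\<lambda>q. q 0) ` S"
    using wfE_min[OF wfW] by metis
  then obtain p where pS: "p \<in> S" and zp: "z = p 0" by blast
  have pmin: "(q 0, p 0) \<notin> W" if "q \<in> S" for q using zmin zp that by blast
  have pA: "\<forall>i\<le>n. p i \<in> A" and p00: "p 0 \<noteq> (\<lambda>_. 0)"
    and prel: "\<forall>x. \<forall>j<m. p 0 x * \<psi> x j = (\<Sum>i=1..n. p i x * \<phi> i x j)"
    using pS unfolding S_def by auto
  have gcdp: "\<forall>d\<in>A. (\<forall>i\<le>n. d divides\<^bsub>?R\<^esub> p i) \<longrightarrow> d \<in> Units ?R"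
  proof (intro ballI impI)
    fix d assume dA: "d \<in> A" and dv: "\<forall>i\<le>n. d divides\<^bsub>?R\<^esub> p i"
    have "\<forall>i. \<exists>c. i \<le> n \<longrightarrow> c \<in> A \<and> p i = (\<lambda>x. d x * c x)" using dv by (auto simp: fr_divides)
    then obtain e where e: "\<And>i. i \<le> n \<longrightarrow> e i \<in> A \<and> p i = (\<lambda>x. d x * e i x)" by metis
    have eA: "e i \<in> A" if "i \<le> n" for i using e that by blast
    have pe: "p i x = d x * e i x" if "i \<le> n" for i x using e that by simp
    have d0: "d \<noteq> (\<lambda>_. 0)"
    proof
      assume "d = (\<lambda>_. 0)"
      then have "p 0 = (\<lambda>_. 0)" using pe[of 0] by (auto simp: fun_eq_iff)
      with p00 show False by simp
    qed
    have e0: "e 0 \<noteq> (\<lambda>_. 0)"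
    proof
      assume "e 0 = (\<lambda>_. 0)"
      then have "p 0 = (\<lambda>_. 0)" using pe[of 0] by (auto simp: fun_eq_iff)
      with p00 show False by simp
    qed
    have erel: "\<forall>x. \<forall>j<m. e 0 x * \<psi> x j = (\<Sum>i=1..n. e i x * \<phi> i x j)"
    proof (intro allI impI)
      fix x j assume j: "j < m"
      have "(\<lambda>x. \<psi> x j) \<in> A" using psiA j by auto
      then have g: "(\<lambda>x. e 0 x * \<psi> x j) \<in> A" using A_mult[OF acr eA[of 0]] by auto
      have h: "(\<lambda>x. \<Sum>i=1..n. e i x * \<phi> i x j) \<in> A"
      proof (rule A_sum[OF acr])
        show "finite {1..n}" by simp
        fix i assume i: "i \<in> {1..n}"
        then have "(\<lambda>x. \<phi> i x j) \<in> A" using phiA j by auto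
        then show "(\<lambda>x. e i x * \<phi> i x j) \<in> A" using A_mult[OF acr eA[of i]] i by auto
      qed
      have "(\<lambda>x. e 0 x * \<psi> x j) = (\<lambda>x. \<Sum>i=1..n. e i x * \<phi> i x j)"
      proof (rule fr_cancel[OF acr dom dA g h d0])
        fix y
        have "d y * (e 0 y * \<psi> y j) = p 0 y * \<psi> y j" using pe[of 0 y] by simp
        also have "\<dots> = (\<Sum>i=1..n. p i y * \<phi> i y j)" using prel j by blast
        also have "\<dots> = (\<Sum>i=1..n. d y * (e i y * \<phi> i y j))"
          by (rule sum.cong) (simp_all add: pe)
        also have "\<dots> = d y * (\<Sum>i=1..n. e i y * \<phi> i y j)" by (simp add: sum_distrib_left)
        finally show "d y * (e 0 y * \<psi> y j) = d y * (\<Sum>i=1..n. e i y * \<phi> i y j)" .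
      qed
      then show "e 0 x * \<psi> x j = (\<Sum>i=1..n. e i x * \<phi> i x j)" by (rule fun_cong)
    qed
    have "e \<in> S" unfolding S_def using eA e0 erel by auto
    then have nW: "(e 0, p 0) \<notin> W" by (rule pmin)
    have e0c: "e 0 \<in> carrier (mult_of ?R)" and p0c: "p 0 \<in> carrier (mult_of ?R)"
      and dc: "d \<in> carrier (mult_of ?R)"
      using eA[of 0] e0 pA p00 dA d0 by (auto simp: fr_carrier fr_zero)
    have "p 0 = e 0 \<otimes>\<^bsub>mult_of ?R\<^esub> d"
      by (auto simp: fr_mult fun_eq_iff pe mult.commute)
    then have "e 0 divides\<^bsub>mult_of ?R\<^esub> p 0"
      unfolding factor_def using dc by blast
    then have "p 0 divides\<^bsub>mult_of ?R\<^esub> e 0" using nW e0c p0c unfolding W_def properfactor_def by blast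
    then obtain u where u: "u \<in> carrier (mult_of ?R)" "e 0 = p 0 \<otimes>\<^bsub>mult_of ?R\<^esub> u"
      unfolding factor_def by blast
    then have uA: "u \<in> A" and eu: "e 0 = (\<lambda>x. p 0 x * u x)" by (auto simp: fr_carrier fr_mult)
    have "p 0 \<in> A" using pA by simp
    have du: "(\<lambda>_. 1) = (\<lambda>x. d x * u x)"
    proof (rule fr_cancel[OF acr dom \<open>p 0 \<in> A\<close> A_const[OF acr] A_mult[OF acr dA uA] p00])
      fix y
      have "p 0 y * (d y * u y) = d y * (p 0 y * u y)" by (simp add: mult_ac)
      also have "\<dots> = d y * e 0 y" using fun_cong[OF eu, of y] by simp
      also have "\<dots> = p 0 y" using pe[of 0 y] by simp
      finally show "p 0 y * 1 = p 0 y * (d y * u y)" by simp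
    qed
    then have "(\<lambda>x. d x * u x) = (\<lambda>_. 1)" "(\<lambda>x. u x * d x) = (\<lambda>_. 1)"
      by (simp_all add: fun_eq_iff mult.commute)
    then show "d \<in> Units ?R" unfolding fr_units using dA uA by blast
  qed
  have uniq: "(\<forall>x. \<forall>j<m. h 0 x * \<psi> x j = (\<Sum>i=1..n. h i x * \<phi> i x j)) \<longleftrightarrow>
               (\<exists>g\<in>A. \<forall>i\<le>n. h i = (\<lambda>x. g x * p i x))" if hA: "\<forall>i\<le>n. h i \<in> A" for h
  proof
    assume hrel: "\<forall>x. \<forall>j<m. h 0 x * \<psi> x j = (\<Sum>i=1..n. h i x * \<phi> i x j)"
    have key: "(\<lambda>x. p 0 x * h i x) = (\<lambda>x. h 0 x * p i x)" if i: "i \<le> n" for i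
    proof (rule fr_cancel[OF acr dom D_A _ _ Dnz])
      show "(\<lambda>x. p 0 x * h i x) \<in> A" using A_mult[OF acr] pA hA i by auto
      show "(\<lambda>x. h 0 x * p i x) \<in> A" using A_mult[OF acr] pA hA i by auto
      fix x
      show "D x * (p 0 x * h i x) = D x * (h 0 x * p i x)"
      proof (cases "D x = 0")
        case True
        then show ?thesis by simp
      next
        case False
        define c where "c = (\<lambda>i. p 0 x * h i x - h 0 x * p i x)"
        have "\<forall>j<m. (\<Sum>i=1..n. c i * \<phi> i x j) = 0"
        proof (intro allI impI)
          fix j assume j: "j < m"
          have "(\<Sum>i=1..n. c i * \<phi> i x j) = (\<Sum>i=1..n. p 0 x * (h i x * \<phi> i x j) - h 0 x * (p i x * \<phi> i x j))"
            by (rule sum.cong) (simp_all add: c_def algebra_simps)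
          also have "\<dots> = p 0 x * (\<Sum>i=1..n. h i x * \<phi> i x j) - h 0 x * (\<Sum>i=1..n. p i x * \<phi> i x j)"
            by (simp add: sum_subtractf sum_distrib_left)
          also have "\<dots> = p 0 x * (h 0 x * \<psi> x j) - h 0 x * (p 0 x * \<psi> x j)"
            using hrel prel j by simp
          also have "\<dots> = 0" by simp
          finally show "(\<Sum>i=1..n. c i * \<phi> i x j) = 0" .
        qed
        then have "\<forall>i\<in>{1..n}. c i = 0" using indep[OF False] unfolding lin_indep_def by blast
        then show ?thesis using i by (cases "i = 0") (auto simp: c_def mult.commute)
      qed
    qed
    have "p 0 divides\<^bsub>?R\<^esub> h 0"
    proof (rule factorial_domain.gauss_lemma[OF fd, where c = p and I = "{..n}"])
      show "p 0 \<in> carrier ?R" using pA by (simp add: fr_carrier)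
      show "p 0 \<noteq> \<zero>\<^bsub>?R\<^esub>" using p00 by (simp add: fr_zero)
      show "h 0 \<in> carrier ?R" using hA by (simp add: fr_carrier)
      show "\<forall>i\<in>{..n}. p i \<in> carrier ?R" using pA by (simp add: fr_carrier)
      show "\<forall>d\<in>carrier ?R. (\<forall>i\<in>{..n}. d divides\<^bsub>?R\<^esub> p i) \<longrightarrow> d \<in> Units ?R"
        using gcdp by (simp add: fr_carrier)
      show "\<forall>i\<in>{..n}. p 0 divides\<^bsub>?R\<^esub> h 0 \<otimes>\<^bsub>?R\<^esub> p i"
      proof
        fix i assume i: "i \<in> {..n}"
        then have "h 0 \<otimes>\<^bsub>?R\<^esub> p i = (\<lambda>x. p 0 x * h i x)" using key[of i] by (simp add: fr_mult)
        then show "p 0 divides\<^bsub>?R\<^esub> h 0 \<otimes>\<^bsub>?R\<^esub> p i" using hA i by (auto simp: fr_divides)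
      qed
    qed
    then obtain g where gA: "g \<in> A" and hg: "h 0 = (\<lambda>x. p 0 x * g x)" by (auto simp: fr_divides)
    have "h i = (\<lambda>x. g x * p i x)" if i: "i \<le> n" for i
    proof (rule fr_cancel[OF acr dom _ _ _ p00])
      show "p 0 \<in> A" "h i \<in> A" using pA hA i by auto
      show "(\<lambda>x. g x * p i x) \<in> A" using A_mult[OF acr gA] pA i by auto
      fix y
      have "p 0 y * h i y = h 0 y * p i y" using fun_cong[OF key[OF i], of y] by simp
      then show "p 0 y * h i y = p 0 y * (g y * p i y)" using fun_cong[OF hg, of y] by (simp add: mult_ac)
    qed
    then show "\<exists>g\<in>A. \<forall>i\<le>n. h i = (\<lambda>x. g x * p i x)" using gA by blast
  next
    assume "\<exists>g\<in>A. \<forall>i\<le>n. h i = (\<lambda>x. g x * p i x)"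
    then obtain g where hg: "\<forall>i\<le>n. h i = (\<lambda>x. g x * p i x)" by blast
    show "\<forall>x. \<forall>j<m. h 0 x * \<psi> x j = (\<Sum>i=1..n. h i x * \<phi> i x j)"
    proof (intro allI impI)
      fix x j assume j: "j < m"
      have "h 0 x * \<psi> x j = g x * (p 0 x * \<psi> x j)" using hg by simp
      also have "\<dots> = g x * (\<Sum>i=1..n. p i x * \<phi> i x j)" using prel j by simp
      also have "\<dots> = (\<Sum>i=1..n. g x * (p i x * \<phi> i x j))" by (simp add: sum_distrib_left)
      also have "\<dots> = (\<Sum>i=1..n. h i x * \<phi> i x j)"
        by (rule sum.cong) (use hg in auto)
      finally show "h 0 x * \<psi> x j = (\<Sum>i=1..n. h i x * \<phi> i x j)" .
    qed
  qed
  show ?thesis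
    by (rule exI[of _ p]) (use pA gcdp prel uniq in blast)
qed


end
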